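(* Let $\lambda = (\lambda_1,\dots,\lambda_r)$ be a partition of $n$ with all $\lambda_i > 0$. For $T \subseteq \{1,\dots,r\}$ let $\lambda^{\downarrow T} = (\lambda_1 - \chi_T(1), \dots, \lambda_r - \chi_T(r))$, where $\chi_T$ is the indicator function of $T$. Then $$f_{\lambda,n-\lambda_1}(q) = \sum_{S \subseteq \{ 2,\dots, r \}} q^{|S| n - \binom{|S| + 1}{2}}\, f_{\lambda^{\downarrow (S \cup \{1 \})},\,n-\lambda_1-|S|}(q),$$ with the convention that $f_{\gamma,i}=0$ whenever $\gamma$ is not a partition (i.e. not weakly decreasing).
   Context: For a partition $\lambda\vdash N$ (trailing zero parts allowed), a standard Young tableau of shape $\lambda$ is a filling of the Ferrers diagram with $1,\dots,N$, increasing along rows and down columns; it has a descent at $m$ if $m+1$ lies in a strictly lower row than $m$; $\mathrm{des}$ is the number of descents and $\mathrm{maj}$ their sum. $f_{\lambda,i}(q)=\sum q^{\mathrm{maj}(\tau)}$ over standard Young tableaux of shape $\lambda$ with $\mathrm{des}(\tau)=i$. *)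

theory Defs
  imports "HOL-Computational_Algebra.Polynomial"
begin

text \<open>Partitions are lists (lambda_1, ..., lambda_r) of naturals, 0-indexed:
  the list entry number i is lambda_(i+1). Trailing zero parts are allowed.\<close>

definition is_partition :: "nat list \<Rightarrow> bool" where
  "is_partition lam \<longleftrightarrow> sorted_wrt (\<ge>) lam"

definition cells :: "nat list \<Rightarrow> (nat \<times> nat) set" where
  "cells lam = {(i, j). i < length lam \<and> j < lam ! i}"

definition syt :: "nat list \<Rightarrow> (nat \<times> nat \<Rightarrow> nat) set" where
  "syt lam = {T. bij_betw T (cells lam) {1..sum_list lam}
                 \<and> (\<forall>p. p \<notin> cells lam \<longrightarrow> T p = 0)
                 \<and> (\<forall>i j. (i, Suc j) \<in> cells lam \<longrightarrow> T (i, j) < T (i, Suc j))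
                 \<and> (\<forall>i j. (Suc i, j) \<in> cells lam \<longrightarrow> T (i, j) < T (Suc i, j))}"

definition row_of :: "nat list \<Rightarrow> (nat \<times> nat \<Rightarrow> nat) \<Rightarrow> nat \<Rightarrow> nat" where
  "row_of lam T m = fst (the_inv_into (cells lam) T m)"

definition descents :: "nat list \<Rightarrow> (nat \<times> nat \<Rightarrow> nat) \<Rightarrow> nat set" where
  "descents lam T = {m. 1 \<le> m \<and> m < sum_list lam \<and> row_of lam T (Suc m) > row_of lam T m}"

definition des :: "nat list \<Rightarrow> (nat \<times> nat \<Rightarrow> nat) \<Rightarrow> nat" where
  "des lam T = card (descents lam T)"

definition maj :: "nat list \<Rightarrow> (nat \<times> nat \<Rightarrow> nat) \<Rightarrow> nat" where
  "maj lam T = \<Sum>(descents lam T)"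

definition fpoly :: "nat list \<Rightarrow> nat \<Rightarrow> int poly" where
  "fpoly lam i = (if is_partition lam
      then (\<Sum>T\<in>{T \<in> syt lam. des lam T = i}. monom 1 (maj lam T)) else 0)"

text \<open>lam lowered by the indicator of T (T a set of 0-based row indices).\<close>
definition lower :: "nat list \<Rightarrow> nat set \<Rightarrow> nat list" where
  "lower lam T = map (\<lambda>i. lam ! i - (if i \<in> T then 1 else 0)) [0..<length lam]"

end

theory Submission
  imports Defs "HOL-Library.FuncSet"
begin



lemma cells_iff[simp]: "(i,j) \<in> cells lam \<longleftrightarrow> i < length lam \<and> j < lam!i"
  by (simp add: cells_def)

lemma cells_Sigma: "cells lam = Sigma {..<length lam} (\<lambda>i. {..<lam!i})"
  by (auto simp: cells_def)

lemma finite_cells[simp]: "finite (cells lam)"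
  by (simp add: cells_Sigma)

lemma card_cells: "card (cells lam) = sum_list lam"
  by (simp add: cells_Sigma sum_list_sum_nth atLeast0LessThan)

lemma syt_D:
  assumes "T \<in> syt lam"
  shows "bij_betw T (cells lam) {1..sum_list lam}"
    "\<And>p. p \<notin> cells lam \<Longrightarrow> T p = 0"
    "\<And>i j. (i, Suc j) \<in> cells lam \<Longrightarrow> T (i, j) < T (i, Suc j)"
    "\<And>i j. (Suc i, j) \<in> cells lam \<Longrightarrow> T (i, j) < T (Suc i, j)"
  using assms by (auto simp: syt_def)

lemma syt_range: "T \<in> syt lam \<Longrightarrow> p \<in> cells lam \<Longrightarrow> T p \<in> {1..sum_list lam}"
  using syt_D(1) bij_betwE by blast

lemma syt_inj: "T \<in> syt lam \<Longrightarrow> p \<in> cells lam \<Longrightarrow> q \<in> cells lam \<Longrightarrow> T p = T q \<Longrightarrow> p = q"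
  using syt_D(1) bij_betw_def inj_on_def by metis

lemma syt_ex_cell: "T \<in> syt lam \<Longrightarrow> m \<in> {1..sum_list lam} \<Longrightarrow> \<exists>p\<in>cells lam. T p = m"
  using syt_D(1) by (metis bij_betw_def imageE)

lemma row_of_cell: "T \<in> syt lam \<Longrightarrow> p \<in> cells lam \<Longrightarrow> row_of lam T (T p) = fst p"
  unfolding row_of_def using syt_D(1) by (metis bij_betw_def the_inv_into_f_f)

lemma row_mono:
  assumes "T \<in> syt lam" "(i,j') \<in> cells lam" "j \<le> j'"
  shows "T (i,j) \<le> T (i,j')"
  using assms(3,2)
proof (induction j' rule: dec_induct)
  case base then show ?case by simp
next
  case (step k)
  then have "(i, Suc k) \<in> cells lam" by simp
  then have "T (i,k) < T (i, Suc k)" using syt_D(3)[OF assms(1)] by blast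
  moreover have "(i,k) \<in> cells lam" using step by simp
  ultimately show ?case using step by simp
qed

lemma finite_syt: "finite (syt lam)"
proof -
  have "syt lam \<subseteq> (\<lambda>g p. if p \<in> cells lam then g p else 0) ` (cells lam \<rightarrow>\<^sub>E {1..sum_list lam})"
  proof
    fix T assume T: "T \<in> syt lam"
    have "T = (\<lambda>p. if p \<in> cells lam then restrict T (cells lam) p else 0)"
      using syt_D(2)[OF T] by auto
    moreover have "restrict T (cells lam) \<in> cells lam \<rightarrow>\<^sub>E {1..sum_list lam}"
      using syt_range[OF T] by auto
    ultimately show "T \<in> (\<lambda>g p. if p \<in> cells lam then g p else 0) ` (cells lam \<rightarrow>\<^sub>E {1..sum_list lam})"
      by blast
  qed
  then show ?thesis by (rule finite_subset) (intro finite_imageI finite_PiE; simp)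
qed

lemma descents_sub: "descents lam T \<subseteq> {1..<sum_list lam}"
  by (auto simp: descents_def)

lemma finite_descents[simp]: "finite (descents lam T)"
  using descents_sub finite_subset by blast




lemma rows_same:
  assumes T: "T \<in> syt lam" and U: "U \<in> syt mu" and eq: "\<forall>p\<in>cells mu. T p = U p"
    and sub: "cells mu \<subseteq> cells lam" and m: "m \<in> {1..sum_list mu}"
  shows "row_of lam T m = row_of mu U m"
proof -
  obtain p where p: "p \<in> cells mu" "U p = m" using syt_ex_cell[OF U m] by blast
  have "row_of mu U m = fst p" using row_of_cell[OF U p(1)] p(2) by simp
  moreover have "T p = m" using p eq by auto
  then have "row_of lam T m = fst p" using row_of_cell[OF T, of p] p sub by auto
  ultimately show ?thesis by simp
qed

lemma glue_descents:
  assumes T: "T \<in> syt lam" and U: "U \<in> syt mu" and mu: "sum_list mu + 1 = a"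
    and an: "a \<le> sum_list lam"
    and sub: "cells mu \<subseteq> cells lam" and eq: "\<forall>p\<in>cells mu. T p = U p"
    and inc: "\<And>m. a \<le> m \<Longrightarrow> m < sum_list lam \<Longrightarrow> row_of lam T m < row_of lam T (Suc m)"
    and ra: "row_of lam T a = 0"
  shows "descents lam T = descents mu U \<union> {a..<sum_list lam}"
proof (rule set_eqI)
  fix m
  consider "Suc m < a" | "Suc m = a" | "a \<le> m" by linarith
  then show "m \<in> descents lam T \<longleftrightarrow> m \<in> descents mu U \<union> {a..<sum_list lam}"
  proof cases
    case 1
    show ?thesis
    proof (cases "1 \<le> m")
      case True
      have "row_of lam T m = row_of mu U m" "row_of lam T (Suc m) = row_of mu U (Suc m)"
        using rows_same[OF T U eq sub] 1 True mu by auto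
      then show ?thesis using 1 True mu an by (auto simp: descents_def)
    next
      case False then show ?thesis using 1 by (auto simp: descents_def)
    qed
  next
    case 2 then show ?thesis using ra mu by (auto simp: descents_def)
  next
    case 3
    then show ?thesis using inc mu by (auto simp: descents_def)
  qed
qed

lemma glue_des_maj:
  assumes T: "T \<in> syt lam" and U: "U \<in> syt mu" and mu: "sum_list mu + 1 = a"
    and an: "a \<le> sum_list lam"
    and sub: "cells mu \<subseteq> cells lam" and eq: "\<forall>p\<in>cells mu. T p = U p"
    and inc: "\<And>m. a \<le> m \<Longrightarrow> m < sum_list lam \<Longrightarrow> row_of lam T m < row_of lam T (Suc m)"
    and ra: "row_of lam T a = 0"
  shows "des lam T = des mu U + (sum_list lam - a)"
    "maj lam T = maj mu U + \<Sum>{a..<sum_list lam}"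
proof -
  have D: "descents lam T = descents mu U \<union> {a..<sum_list lam}"
    by (rule glue_descents[OF assms])
  have disj: "descents mu U \<inter> {a..<sum_list lam} = {}"
    using descents_sub[of mu U] mu by auto
  show "des lam T = des mu U + (sum_list lam - a)"
    unfolding des_def D using disj by (simp add: card_Un_disjoint)
  show "maj lam T = maj mu U + \<Sum>{a..<sum_list lam}"
    unfolding maj_def D using disj by (simp add: sum.union_disjoint)
qed

lemma sum_top: "k \<le> n \<Longrightarrow> \<Sum>{n-k..<(n::nat)} = k * n - (k + 1 choose 2)"
proof (induction k)
  case 0 then show ?case by simp
next
  case (Suc k)
  have e: "{n - Suc k..<n} = insert (n - Suc k) {n-k..<n}" using Suc.prems by auto
  have "\<Sum>{n - Suc k..<n} = (n - Suc k) + (k * n - (k + 1 choose 2))"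
    unfolding e using Suc by simp
  moreover have "(k + 1 choose 2) \<le> k * n"
  proof -
    have "(k + 1 choose 2) = (k+1)*k div 2" by (simp add: choose_two)
    also have "\<dots> \<le> (k+1)*k" by simp
    also have "\<dots> \<le> k * n" using Suc.prems mult_le_mono2[of "k+1" n k] by (simp add: mult.commute)
    finally show ?thesis .
  qed
  moreover have "(Suc k + 1 choose 2) = (k + 1 choose 2) + (k+1)"
    by (simp add: choose_two) 
  ultimately show ?case using Suc.prems by (simp add: algebra_simps)
qed




definition E :: "nat list \<Rightarrow> nat set \<Rightarrow> (nat \<times> nat) set" where
  "E lam X = (\<lambda>i. (i, lam!i - 1)) ` X"

lemma length_lower[simp]: "length (lower lam X) = length lam"
  by (simp add: lower_def)

lemma nth_lower[simp]: "i < length lam \<Longrightarrow> lower lam X ! i = lam!i - (if i \<in> X then 1 else 0)"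
  by (simp add: lower_def)

lemma cells_lower: "cells (lower lam X) = cells lam - E lam X"
proof (rule set_eqI)
  fix p :: "nat \<times> nat"
  obtain i j where p: "p = (i,j)" by force
  show "p \<in> cells (lower lam X) \<longleftrightarrow> p \<in> cells lam - E lam X"
    unfolding p by (cases "i \<in> X") (auto simp: cells_def E_def)
qed

locale shp =
  fixes lam :: "nat list" and n r :: nat
  assumes part: "is_partition lam" and sumn: "sum_list lam = n" and len: "length lam = r"
    and pos: "\<forall>x\<in>set lam. x > 0" and rpos: "0 < r"
begin

lemma pos': "i < r \<Longrightarrow> lam!i > 0"
  using pos len nth_mem by blast

lemma part_nth: "i \<le> j \<Longrightarrow> j < r \<Longrightarrow> lam!j \<le> lam!i"
  using part len unfolding is_partition_def
  by (metis le_eq_less_or_eq order.refl sorted_wrt_nth_less)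

lemma E_sub: "X \<subseteq> {..<r} \<Longrightarrow> E lam X \<subseteq> cells lam"
  using pos' len by (force simp: E_def)

lemma card_E: "card (E lam X) = card X"
  unfolding E_def by (rule card_image) (auto simp: inj_on_def)

lemma sum_lower: "X \<subseteq> {..<r} \<Longrightarrow> sum_list (lower lam X) = n - card X"
proof -
  assume X: "X \<subseteq> {..<r}"
  have "sum_list (lower lam X) = card (cells lam - E lam X)"
    by (simp add: card_cells[symmetric] cells_lower)
  also have "\<dots> = card (cells lam) - card (E lam X)"
    using E_sub[OF X] by (simp add: card_Diff_subset finite_subset)
  finally show ?thesis by (simp add: card_cells card_E sumn)
qed

lemma card_le_n: "X \<subseteq> {..<r} \<Longrightarrow> card X \<le> n"
  using E_sub card_E card_mono[OF finite_cells] card_cells sumn by metis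

end




definition fa :: "nat list \<Rightarrow> (nat \<times> nat \<Rightarrow> nat) \<Rightarrow> nat" where
  "fa lam T = T (0, lam!0 - 1)"
definition fS :: "nat list \<Rightarrow> (nat \<times> nat \<Rightarrow> nat) \<Rightarrow> nat set" where
  "fS lam T = row_of lam T ` {fa lam T<..sum_list lam}"
definition fU :: "nat list \<Rightarrow> (nat \<times> nat \<Rightarrow> nat) \<Rightarrow> (nat \<times> nat \<Rightarrow> nat)" where
  "fU lam T = (\<lambda>p. if T p < fa lam T then T p else 0)"

lemma part_of_closed:
  assumes "\<And>i j. (Suc i, j) \<in> cells mu \<Longrightarrow> (i, j) \<in> cells mu"
  shows "is_partition mu"
  unfolding is_partition_def
proof (subst sorted_wrt_iff_nth_Suc_transp, (simp add: transp_def), intro allI impI)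
  fix i assume i: "Suc i < length mu"
  show "mu ! Suc i \<le> mu ! i"
  proof (cases "mu ! Suc i = 0")
    case False
    then have "(Suc i, mu ! Suc i - 1) \<in> cells mu" using i by simp
    then have "(i, mu ! Suc i - 1) \<in> cells mu" by (rule assms)
    then show ?thesis using False by auto
  qed simp
qed

context shp begin

context
  fixes T assumes T: "T \<in> syt lam" and desT: "des lam T = n - lam!0"
begin

lemma cell0: "(0, lam!0 - 1) \<in> cells lam"
  using pos'[OF rpos] rpos len by simp

lemma a_range: "fa lam T \<in> {1..n}"
  using syt_range[OF T cell0] sumn by (simp add: fa_def)

lemma rho_a: "row_of lam T (fa lam T) = 0"
  using row_of_cell[OF T cell0] by (simp add: fa_def)

definition N where "N = (\<lambda>j. T (0,j) - 1) ` {1..<lam!0}"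

lemma N_sub: "N \<subseteq> {1..<n}"
proof
  fix m assume "m \<in> N"
  then obtain j where j: "j \<in> {1..<lam!0}" "m = T(0,j) - 1" by (auto simp: N_def)
  have c: "(0, Suc (j-1)) \<in> cells lam" using j len rpos by simp
  have c1: "(0, j-1) \<in> cells lam" using j len rpos by (simp add: less_imp_diff_less)
  have "T (0, j-1) < T (0, j)" using syt_D(3)[OF T c] j by simp
  moreover have "T (0, j-1) \<ge> 1" using syt_range[OF T c1] by simp
  moreover have "T (0,j) \<le> n" using syt_range[OF T, of "(0,j)"] len rpos j sumn by simp
  ultimately show "m \<in> {1..<n}" using j by auto
qed

lemma card_N: "card N = lam!0 - 1"
proof -
  have "inj_on (\<lambda>j. T (0,j) - 1) {1..<lam!0}"
  proof (rule inj_onI)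
    fix x y assume xy: "x \<in> {1..<lam!0}" "y \<in> {1..<lam!0}" "T (0,x) - 1 = T (0,y) - 1"
    have "T (0,x) \<ge> 1" "T (0,y) \<ge> 1"
      using syt_range[OF T, of "(0,x)"] syt_range[OF T, of "(0,y)"] xy len rpos by auto
    then have "T (0,x) = T (0,y)" using xy by simp
    then show "x = y" using syt_inj[OF T, of "(0,x)" "(0,y)"] xy len rpos by simp
  qed
  then show ?thesis by (simp add: N_def card_image)
qed

lemma desc_eq: "descents lam T = {1..<n} - N"
proof -
  have sub: "descents lam T \<subseteq> {1..<n} - N"
  proof
    fix m assume m: "m \<in> descents lam T"
    have "m \<notin> N"
    proof
      assume "m \<in> N"
      then obtain j where j: "j \<in> {1..<lam!0}" "m = T(0,j) - 1" by (auto simp: N_def)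
      have "T (0,j) \<ge> 1" using syt_range[OF T, of "(0,j)"] len rpos j by simp
      then have "Suc m = T (0,j)" using j by simp
      then have "row_of lam T (Suc m) = 0" using row_of_cell[OF T, of "(0,j)"] len rpos j by simp
      then show False using m by (simp add: descents_def)
    qed
    then show "m \<in> {1..<n} - N" using m sumn by (auto simp: descents_def)
  qed
  have "card ({1..<n} - N) = (n - 1) - (lam!0 - 1)"
    using N_sub card_N by (simp add: card_Diff_subset finite_subset)
  also have "\<dots> = n - lam!0" using pos'[OF rpos] by simp
  finally have "card (descents lam T) = card ({1..<n} - N)" using desT by (simp add: des_def)
  then show ?thesis using sub by (intro card_subset_eq) auto
qed

lemma inc: "fa lam T \<le> m \<Longrightarrow> m < n \<Longrightarrow> row_of lam T m < row_of lam T (Suc m)"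
proof -
  assume m: "fa lam T \<le> m" "m < n"
  have "m \<notin> N"
  proof
    assume "m \<in> N"
    then obtain j where j: "j \<in> {1..<lam!0}" "m = T(0,j) - 1" by (auto simp: N_def)
    have "T (0,j) \<ge> 1" using syt_range[OF T, of "(0,j)"] len rpos j by simp
    moreover have "j \<le> lam!0 - 1" using j by auto
    then have "T (0,j) \<le> fa lam T" unfolding fa_def
      using row_mono[OF T cell0, of j] by simp
    ultimately show False using j m by simp
  qed
  moreover have "1 \<le> m" using a_range m by simp
  ultimately have "m \<in> descents lam T" using desc_eq m by simp
  then show ?thesis by (simp add: descents_def)
qed

lemma smono: "fa lam T \<le> x \<Longrightarrow> x < y \<Longrightarrow> y \<le> n \<Longrightarrow> row_of lam T x < row_of lam T y"
proof (induction y rule: less_induct)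
  case (less y)
  show ?case
  proof (cases "x = y - 1")
    case True then show ?thesis using inc[of x] less.prems by (metis Suc_pred' le_less_trans less_imp_le_nat not_less_zero zero_less_iff_neq_zero Suc_le_eq)
  next
    case False
    then have "row_of lam T x < row_of lam T (y-1)" using less by auto
    moreover have "row_of lam T (y-1) < row_of lam T y" using inc[of "y-1"] less.prems False by auto
    ultimately show ?thesis by simp
  qed
qed

lemma cell_of:
  assumes m: "m \<in> {fa lam T..n}"
  shows "\<exists>p\<in>cells lam. T p = m \<and> p = (row_of lam T m, lam!(row_of lam T m) - 1)"
proof -
  have "m \<in> {1..sum_list lam}" using m a_range sumn by auto
  then obtain p where p: "p \<in> cells lam" "T p = m" using syt_ex_cell[OF T] by blast
  obtain i j where ij: "p = (i,j)" by force
  have ri: "row_of lam T m = i" using row_of_cell[OF T p(1)] p ij by simp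
  have "j = lam!i - 1"
  proof (rule ccontr)
    assume "j \<noteq> lam!i - 1"
    then have c: "(i, Suc j) \<in> cells lam" using p ij by auto
    then have lt: "m < T (i, Suc j)" using syt_D(3)[OF T c] p ij by simp
    have "T (i, Suc j) \<le> n" using syt_range[OF T c] sumn by simp
    then have "row_of lam T m < row_of lam T (T (i, Suc j))" using smono[OF _ lt] m by simp
    then show False using row_of_cell[OF T c] ri by simp
  qed
  then show ?thesis using p ij ri by auto
qed

lemma inj_rho: "inj_on (row_of lam T) {fa lam T..n}"
  by (rule inj_onI) (metis atLeastAtMost_iff linorder_neqE_nat smono less_irrefl)

lemma S_props: "0 \<notin> fS lam T" "fS lam T \<subseteq> {1..<r}" "card (fS lam T) = n - fa lam T"
   "insert 0 (fS lam T) = row_of lam T ` {fa lam T..n}"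
proof -
  show "0 \<notin> fS lam T" unfolding fS_def sumn using smono rho_a
    by (metis greaterThanAtMost_iff imageE less_irrefl order_refl)
  moreover have "fS lam T \<subseteq> {..<r}"
    unfolding fS_def sumn using cell_of len by (force)
  ultimately show "fS lam T \<subseteq> {1..<r}"
  proof (intro subsetI)
    fix x :: nat assume a: "0 \<notin> fS lam T" "fS lam T \<subseteq> {..<r}" "x \<in> fS lam T"
    have "x \<noteq> 0" using a(1,3) by metis
    moreover have "x < r" using a(2,3) by blast
    ultimately
    show "x \<in> {1..<r}" by simp
  qed
  show "card (fS lam T) = n - fa lam T" unfolding fS_def sumn
    by (subst card_image) (auto intro: inj_on_subset[OF inj_rho])
  have "{fa lam T..n} = insert (fa lam T) {fa lam T<..n}" using a_range by auto
  then show "insert 0 (fS lam T) = row_of lam T ` {fa lam T..n}"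
    unfolding fS_def sumn using rho_a by simp
qed

lemma big_iff: "p \<in> cells lam \<Longrightarrow> fa lam T \<le> T p \<longleftrightarrow> p \<in> E lam (insert 0 (fS lam T))"
proof
  assume p: "p \<in> cells lam" and ge: "fa lam T \<le> T p"
  have "T p \<in> {fa lam T..n}" using ge syt_range[OF T p] sumn by simp
  then obtain q where q: "q \<in> cells lam" "T q = T p" "q = (row_of lam T (T p), lam!(row_of lam T (T p)) - 1)"
    using cell_of by blast
  have "q = p" using syt_inj[OF T q(1) p q(2)] .
  then show "p \<in> E lam (insert 0 (fS lam T))"
  proof -
    have "row_of lam T (T p) \<in> row_of lam T ` {fa lam T..n}" using \<open>T p \<in> _\<close> by blast
    then show ?thesis unfolding S_props(4) E_def using q(3) \<open>q = p\<close>
      by (metis (no_types, lifting) image_eqI)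
  qed
next
  assume p: "p \<in> cells lam" and e: "p \<in> E lam (insert 0 (fS lam T))"
  then obtain m where m: "m \<in> {fa lam T..n}" "p = (row_of lam T m, lam!(row_of lam T m) - 1)"
    unfolding S_props(4) E_def by auto
  then show "fa lam T \<le> T p" using cell_of[OF m(1)] by auto
qed

lemma cells_mu: "cells (lower lam (insert 0 (fS lam T))) = {p \<in> cells lam. T p < fa lam T}"
proof (rule set_eqI)
  fix p show "p \<in> cells (lower lam (insert 0 (fS lam T))) \<longleftrightarrow> p \<in> {p \<in> cells lam. T p < fa lam T}"
    unfolding cells_lower using big_iff[of p] by (cases "p \<in> cells lam") (simp_all add: not_le[symmetric])
qed

abbreviation "Sf \<equiv> fS lam T"
abbreviation "muf \<equiv> lower lam (insert 0 (fS lam T))"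

lemma SX: "insert 0 Sf \<subseteq> {..<r}" using S_props(2) rpos by (auto simp add: subset_iff)

lemma sum_mu: "sum_list muf = fa lam T - 1"
proof -
  have "insert 0 Sf \<subseteq> {..<r}" by (rule SX)
  then have "sum_list muf = n - card (insert 0 Sf)" by (rule sum_lower)
  also have "card (insert 0 Sf) = n - fa lam T + 1"
    using S_props(1,3) finite_subset[OF S_props(2)] by simp
  finally show ?thesis using a_range by simp
qed

lemma U_syt: "fU lam T \<in> syt muf"
proof -
  have bT: "bij_betw T {p \<in> cells lam. T p < fa lam T} {1..fa lam T - 1}"
    unfolding bij_betw_def
  proof
    show "inj_on T {p \<in> cells lam. T p < fa lam T}"
      using syt_D(1)[OF T] by (auto simp: bij_betw_def intro: inj_on_subset)
    show "T ` {p \<in> cells lam. T p < fa lam T} = {1..fa lam T - 1}"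
    proof
      show "T ` {p \<in> cells lam. T p < fa lam T} \<subseteq> {1..fa lam T - 1}"
        using syt_range[OF T] by force
      show "{1..fa lam T - 1} \<subseteq> T ` {p \<in> cells lam. T p < fa lam T}"
      proof
        fix m assume m: "m \<in> {1..fa lam T - 1}"
        then have "m \<in> {1..sum_list lam}" using a_range sumn by auto
        then obtain p where "p \<in> cells lam" "T p = m" using syt_ex_cell[OF T] by blast
        then show "m \<in> T ` {p \<in> cells lam. T p < fa lam T}" using m a_range by force
      qed
    qed
  qed
  have b: "bij_betw (fU lam T) (cells muf) {1..sum_list muf}"
    unfolding sum_mu cells_mu
    by (rule bij_betw_cong[THEN iffD1, OF _ bT]) (simp add: fU_def)
  have z: "\<And>p. p \<notin> cells muf \<Longrightarrow> fU lam T p = 0"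
    unfolding cells_mu fU_def using syt_D(2)[OF T] by auto
  have rr: "\<And>i j. (i, Suc j) \<in> cells muf \<Longrightarrow> fU lam T (i, j) < fU lam T (i, Suc j)"
  proof -
    fix i j assume c: "(i, Suc j) \<in> cells muf"
    then have c': "(i, Suc j) \<in> cells lam" "T (i, Suc j) < fa lam T" unfolding cells_mu by auto
    have "T (i,j) < T (i, Suc j)" using syt_D(3)[OF T c'(1)] .
    then show "fU lam T (i, j) < fU lam T (i, Suc j)" using c'(2) by (simp add: fU_def)
  qed
  have cc: "\<And>i j. (Suc i, j) \<in> cells muf \<Longrightarrow> fU lam T (i, j) < fU lam T (Suc i, j)"
  proof -
    fix i j assume c: "(Suc i, j) \<in> cells muf"
    then have c': "(Suc i, j) \<in> cells lam" "T (Suc i, j) < fa lam T" unfolding cells_mu by auto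
    have "T (i,j) < T (Suc i, j)" using syt_D(4)[OF T c'(1)] .
    then show "fU lam T (i, j) < fU lam T (Suc i, j)" using c'(2) by (simp add: fU_def)
  qed
  show ?thesis unfolding syt_def using b z rr cc by blast
qed

lemma mu_part: "is_partition muf"
proof (rule part_of_closed)
  fix i j assume c: "(Suc i, j) \<in> cells muf"
  then have c': "(Suc i, j) \<in> cells lam" "T (Suc i, j) < fa lam T" unfolding cells_mu by auto
  have "(i,j) \<in> cells lam" using c'(1) part_nth[of i "Suc i"] len by auto
  moreover have "T (i,j) < T (Suc i, j)" using syt_D(4)[OF T c'(1)] .
  ultimately show "(i, j) \<in> cells muf" using c'(2) unfolding cells_mu by auto
qed

lemma glue_fwd: "des lam T = des muf (fU lam T) + (n - fa lam T)"
   "maj lam T = maj muf (fU lam T) + \<Sum>{fa lam T..<n}"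
proof -
  have eq: "\<forall>p\<in>cells muf. T p = fU lam T p" unfolding cells_mu by (simp add: fU_def)
  have sub: "cells muf \<subseteq> cells lam" unfolding cells_mu by auto
  have s: "sum_list muf + 1 = fa lam T" using sum_mu a_range by simp
  note g = glue_des_maj[OF T U_syt s _ sub eq, unfolded sumn, OF _ inc rho_a]
  show "des lam T = des muf (fU lam T) + (n - fa lam T)"
       "maj lam T = maj muf (fU lam T) + \<Sum>{fa lam T..<n}" using g a_range by auto
qed

lemma T_on_E: "p \<in> E lam (insert 0 Sf) \<Longrightarrow> T p = fa lam T + card {t \<in> insert 0 Sf. t < fst p}"
proof -
  assume pE: "p \<in> E lam (insert 0 Sf)"
  have pc: "p \<in> cells lam" using pE E_sub[OF SX] by auto
  define m where "m = T p"
  have m: "m \<in> {fa lam T..n}" using big_iff[OF pc] pE syt_range[OF T pc] sumn m_def by auto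
  obtain q where q: "q \<in> cells lam" "T q = m" "q = (row_of lam T m, lam!(row_of lam T m) - 1)"
    using cell_of[OF m] by blast
  have "q = p" using syt_inj[OF T q(1) pc] q(2) m_def by simp
  then have fp: "fst p = row_of lam T m" using q(3) by auto
  have "{t \<in> insert 0 Sf. t < fst p} = row_of lam T ` {fa lam T..<m}"
  proof
    show "row_of lam T ` {fa lam T..<m} \<subseteq> {t \<in> insert 0 Sf. t < fst p}"
      unfolding S_props(4) fp using smono m by auto
    show "{t \<in> insert 0 Sf. t < fst p} \<subseteq> row_of lam T ` {fa lam T..<m}"
    proof
      fix t assume "t \<in> {t \<in> insert 0 Sf. t < fst p}"
      then obtain y where y: "y \<in> {fa lam T..n}" "t = row_of lam T y" "t < row_of lam T m"
        unfolding S_props(4) fp by auto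
      have "y < m"
      proof (rule ccontr)
        assume "\<not> y < m"
        then have "m = y \<or> m < y" by auto
        then show False using y m smono[of m y] by auto
      qed
      then show "t \<in> row_of lam T ` {fa lam T..<m}" using y by auto
    qed
  qed
  moreover have "card (row_of lam T ` {fa lam T..<m}) = m - fa lam T"
    using m by (subst card_image) (auto intro: inj_on_subset[OF inj_rho])
  ultimately show ?thesis using m m_def by simp
qed

end
end



definition gT :: "nat list \<Rightarrow> nat set \<Rightarrow> (nat \<times> nat \<Rightarrow> nat) \<Rightarrow> (nat \<times> nat \<Rightarrow> nat)" where
  "gT lam S U = (\<lambda>p. if p \<in> cells (lower lam (insert 0 S)) then U p
      else if p \<in> cells lam then sum_list lam - card S + card {t \<in> insert 0 S. t < fst p} else 0)"

context shp begin

context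
  fixes S U assumes S: "S \<subseteq> {1..<r}" and mp: "is_partition (lower lam (insert 0 S))"
    and U: "U \<in> syt (lower lam (insert 0 S))"
begin

abbreviation "X \<equiv> insert 0 S"
abbreviation "mu \<equiv> lower lam (insert 0 S)"
abbreviation "aa \<equiv> n - card S"
abbreviation "c i \<equiv> card {t \<in> insert 0 S. t < i}"
abbreviation "G \<equiv> gT lam S U"

lemma X_sub: "X \<subseteq> {..<r}" using S rpos by auto
lemma finS: "finite S" using S finite_subset by blast
lemma cardX: "card X = card S + 1" using S finS by (auto simp: card_insert_if)
lemma aa_pos: "card S + 1 \<le> n" using card_le_n[OF X_sub] cardX by simp
lemma sum_mu_b: "sum_list mu = aa - 1" using sum_lower[OF X_sub] cardX by simp

lemma c_mono: "i \<in> X \<Longrightarrow> i' \<in> X \<Longrightarrow> i < i' \<Longrightarrow> c i < c i'"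
proof -
  assume a: "i \<in> X" "i' \<in> X" "i < i'"
  have f: "finite {t \<in> X. t < i'}" using finS by simp
  have "{t \<in> X. t < i} \<subseteq> {t \<in> X. t < i'}" using a(3) by auto
  moreover have "i \<in> {t \<in> X. t < i'}" "i \<notin> {t \<in> X. t < i}" using a by auto
  ultimately have "{t \<in> X. t < i} \<subset> {t \<in> X. t < i'}" by blast
  then show ?thesis using psubset_card_mono[OF f] by blast
qed

lemma c_le: "i \<in> X \<Longrightarrow> c i \<le> card S"
proof -
  assume i: "i \<in> X"
  have sb: "{t \<in> X. t < i} \<subseteq> X - {i}" by auto
  have fX: "finite (X - {i})" using finS by simp
  have "c i \<le> card (X - {i})" by (rule card_mono[OF fX sb])
  moreover have "card (X - {i}) = card X - 1" using i finS by (intro card_Diff_singleton) auto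
  ultimately show ?thesis using cardX by linarith
qed

lemma c_inj: "inj_on (\<lambda>i. c i) X"
proof (rule inj_onI)
  fix x y assume xy: "x \<in> X" "y \<in> X" "c x = c y"
  show "x = y"
  proof (rule ccontr)
    assume "x \<noteq> y"
    then have "x < y \<or> y < x" by arith
    then show False using c_mono[OF xy(1,2)] c_mono[OF xy(2,1)] xy(3) by auto
  qed
qed

lemma c_img: "(\<lambda>i. c i) ` X = {0..card S}"
proof -
  have "(\<lambda>i. c i) ` X \<subseteq> {0..card S}" using c_le by auto
  moreover have "card ((\<lambda>i. c i) ` X) = card {0..card S}"
    using card_image[OF c_inj] cardX by simp
  ultimately show ?thesis by (intro card_subset_eq) auto
qed

lemma c0: "c 0 = 0" by simp

lemma cells_split: "cells lam = cells mu \<union> E lam X" "cells mu \<inter> E lam X = {}"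
  using E_sub[OF X_sub] unfolding cells_lower by auto

lemma G_mu: "p \<in> cells mu \<Longrightarrow> G p = U p" by (simp add: gT_def)
lemma G_E: "p \<in> E lam X \<Longrightarrow> G p = aa + c (fst p)"
  using cells_split by (auto simp: gT_def sumn)
lemma E_mem: "i \<in> X \<Longrightarrow> (i, lam!i - 1) \<in> E lam X" unfolding E_def by (rule imageI)

lemma U_range: "p \<in> cells mu \<Longrightarrow> U p \<in> {1..aa-1}"
  using syt_range[OF U] sum_mu_b by simp

lemma G_syt: "G \<in> syt lam"
proof -
  have b1: "bij_betw G (cells mu) {1..aa-1}"
    using syt_D(1)[OF U] unfolding sum_mu_b by (rule bij_betw_cong[THEN iffD1, rotated]) (simp add: G_mu)
  have b2: "bij_betw G (E lam X) {aa..n}"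
    unfolding bij_betw_def
  proof
    show "inj_on G (E lam X)"
    proof (rule inj_onI)
      fix p q assume pq: "p \<in> E lam X" "q \<in> E lam X" "G p = G q"
      then have "c (fst p) = c (fst q)" using G_E by simp
      moreover have "fst p \<in> X" "fst q \<in> X" using pq by (auto simp: E_def)
      ultimately have "fst p = fst q" using c_inj by (auto simp: inj_on_def)
      then show "p = q" using pq by (auto simp: E_def)
    qed
    have "G ` E lam X = (\<lambda>i. aa + c i) ` X"
      unfolding E_def image_image using G_E E_mem by (auto intro!: image_cong)
    also have "\<dots> = (+) aa ` ((\<lambda>i. c i) ` X)" by (simp add: image_image)
    also have "\<dots> = {aa..n}" unfolding c_img
    proof (rule set_eqI)
      fix x show "x \<in> (+) aa ` {0..card S} \<longleftrightarrow> x \<in> {aa..n}"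
        using aa_pos by (auto simp: image_iff intro: bexI[of _ "x - aa"])
    qed
    finally show "G ` E lam X = {aa..n}" .
  qed
  have b: "bij_betw G (cells lam) {1..sum_list lam}"
  proof -
    have "{1..aa-1} \<union> {aa..n} = {1..n}" using aa_pos by auto
    then show ?thesis using bij_betw_combine[OF b1 b2] cells_split sumn by auto
  qed
  have z: "\<And>p. p \<notin> cells lam \<Longrightarrow> G p = 0"
    using cells_split syt_D(2)[OF U] by (auto simp: gT_def)
  have rr: "\<And>i j. (i, Suc j) \<in> cells lam \<Longrightarrow> G (i, j) < G (i, Suc j)"
  proof -
    fix i j assume c: "(i, Suc j) \<in> cells lam"
    show "G (i, j) < G (i, Suc j)"
    proof (cases "(i, Suc j) \<in> cells mu")
      case True
      then have ij: "(i,j) \<in> cells mu" by (metis cells_iff Suc_lessD)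
      show ?thesis using G_mu[OF True] G_mu[OF ij] syt_D(3)[OF U True] by simp
    next
      case False
      then have e: "(i, Suc j) \<in> E lam X" using c cells_split by auto
      then have iX: "i \<in> X" and sj: "Suc j = lam!i - 1" by (auto simp: E_def)
      have ir: "i < length lam" using c by simp
      have "(i,j) \<in> cells mu" using iX sj ir by simp
      then have "G (i,j) \<le> aa - 1" using G_mu U_range by auto
      moreover have "G (i, Suc j) \<ge> aa" using G_E[OF e] by simp
      ultimately show ?thesis using aa_pos by simp
    qed
  qed
  have cc: "\<And>i j. (Suc i, j) \<in> cells lam \<Longrightarrow> G (i, j) < G (Suc i, j)"
  proof -
    fix i j assume c: "(Suc i, j) \<in> cells lam"
    show "G (i, j) < G (Suc i, j)"
    proof (cases "(Suc i, j) \<in> cells mu")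
      case True
      have "mu ! Suc i \<le> mu ! i"
        using mp True unfolding is_partition_def
        by (metis cells_iff lessI sorted_wrt_nth_less)
      then have ij: "(i,j) \<in> cells mu" using True unfolding cells_iff by (metis Suc_lessD less_le_trans)
      show ?thesis using G_mu[OF True] G_mu[OF ij] syt_D(4)[OF U True] by simp
    next
      case False
      then have e: "(Suc i, j) \<in> E lam X" using c cells_split by auto
      then have iX: "Suc i \<in> X" by (auto simp: E_def)
      have ci: "(i,j) \<in> cells lam" using c part_nth[of i "Suc i"] len by auto
      have ge: "G (Suc i, j) = aa + c (Suc i)" using G_E[OF e] by simp
      show ?thesis
      proof (cases "(i,j) \<in> cells mu")
        case True
        then have "G (i,j) \<le> aa - 1" using G_mu U_range by auto
        then show ?thesis using ge aa_pos by simp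
      next
        case False
        then have e': "(i, j) \<in> E lam X" using ci cells_split by auto
        then have "i \<in> X" by (auto simp: E_def)
        then have "c i < c (Suc i)" using c_mono iX by simp
        then show ?thesis using G_E[OF e'] ge by simp
      qed
    qed
  qed
  show ?thesis unfolding syt_def using b z rr cc by blast
qed

lemma rho_G: "i \<in> X \<Longrightarrow> row_of lam G (aa + c i) = i"
proof -
  assume i: "i \<in> X"
  have e: "(i, lam!i - 1) \<in> E lam X" by (rule E_mem[OF i])
  then have "(i, lam!i - 1) \<in> cells lam" using cells_split by auto
  then show ?thesis using row_of_cell[OF G_syt] G_E[OF e] by force
qed

lemma m_repr: "m \<in> {aa..n} \<Longrightarrow> \<exists>i\<in>X. m = aa + c i"
proof -
  assume m: "m \<in> {aa..n}"
  then have "m - aa \<in> {0..card S}" by auto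
  then obtain i where i: "i \<in> X" "c i = m - aa" using c_img by (metis (no_types, lifting) imageE)
  then have "m = aa + c i" using m by simp
  then show ?thesis using i(1) by blast
qed

lemma inc_G: "aa \<le> m \<Longrightarrow> m < n \<Longrightarrow> row_of lam G m < row_of lam G (Suc m)"
proof -
  assume m: "aa \<le> m" "m < n"
  have "m \<in> {aa..n}" "Suc m \<in> {aa..n}" using m by auto
  then obtain i i' where i: "i \<in> X" "m = aa + c i" and i': "i' \<in> X" "Suc m = aa + c i'"
    using m_repr by meson
  have "i < i'"
  proof (rule ccontr)
    assume "\<not> i < i'"
    then have "{t \<in> X. t < i'} \<subseteq> {t \<in> X. t < i}" by auto
    moreover have "finite {t \<in> X. t < i}" using finS by simp
    ultimately have "c i' \<le> c i" by (simp add: card_mono)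
    then show False using i i' by simp
  qed
  moreover have "row_of lam G m = i" using rho_G[OF i(1)] i(2) by simp
  moreover have "row_of lam G (Suc m) = i'" using rho_G[OF i'(1)] i'(2) by simp
  ultimately show ?thesis by simp
qed

lemma rho_aa: "row_of lam G aa = 0"
  using rho_G[of 0] by simp

lemma glue_bwd: "des lam G = des mu U + card S" "maj lam G = maj mu U + \<Sum>{aa..<n}"
proof -
  have eq: "\<forall>p\<in>cells mu. G p = U p" using G_mu by simp
  have sub: "cells mu \<subseteq> cells lam" using cells_split by auto
  have s: "sum_list mu + 1 = aa" using sum_mu_b aa_pos by simp
  note g = glue_des_maj[OF G_syt U s _ sub eq, unfolded sumn, OF _ inc_G rho_aa]
  show "des lam G = des mu U + card S" "maj lam G = maj mu U + \<Sum>{aa..<n}"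
    using g aa_pos by auto
qed

lemma fa_G: "fa lam G = aa"
proof -
  have "(0, lam!0 - 1) \<in> E lam X" by (rule E_mem) simp
  then show ?thesis using G_E unfolding fa_def by simp
qed

lemma fS_G: "fS lam G = S"
proof
  show "fS lam G \<subseteq> S"
  proof
    fix i assume "i \<in> fS lam G"
    then obtain m where m: "m \<in> {aa<..n}" "i = row_of lam G m" unfolding fS_def fa_G sumn by auto
    have "m \<in> {aa..n}" using m by auto
    then obtain i' where i': "i' \<in> X" "m = aa + c i'" using m_repr by blast
    then have "i = i'" using rho_G m by simp
    moreover have "c i' > 0" using i' m by simp
    have "i' \<noteq> 0"
    proof
      assume "i' = 0"
      then have "c i' = c 0" by (simp only:)
      then show False using \<open>c i' > 0\<close> c0 by linarith
    qed
    ultimately show "i \<in> S" using i'(1) by blast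
  qed
  show "S \<subseteq> fS lam G"
  proof
    fix i assume i: "i \<in> S"
    then have "0 < i" using S by fastforce
    then have "0 \<in> {t \<in> X. t < i}" by simp
    moreover have "finite {t \<in> X. t < i}" using finS by simp
    ultimately have "c i > 0" by (simp only: card_gt_0_iff) blast
    moreover have "c i \<le> card S" using c_le i by simp
    ultimately have m1: "aa + c i \<in> {aa<..n}" using aa_pos by auto
    have m2: "row_of lam G (aa + c i) = i" using rho_G[of i] i by blast
    show "i \<in> fS lam G" unfolding fS_def fa_G sumn by (rule rev_image_eqI[where f="row_of lam G", OF m1 m2[symmetric]])
  qed
qed

lemma fU_G: "fU lam G = U"
proof
  fix p
  show "fU lam G p = U p"
  proof (cases "p \<in> cells mu")
    case True
    have "U p < aa" using U_range[OF True] aa_pos by auto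
    then show ?thesis using G_mu[OF True] by (simp add: fU_def fa_G)
  next
    case False
    then have "U p = 0" using syt_D(2)[OF U] by simp
    moreover have "G p = 0 \<or> G p \<ge> aa"
    proof (cases "p \<in> cells lam")
      case True
      then have "p \<in> E lam X" using False cells_split by blast
      then show ?thesis using G_E by simp
    next
      case False2: False
      then show ?thesis using False by (simp add: gT_def)
    qed
    ultimately show ?thesis by (auto simp: fU_def fa_G)
  qed
qed

end

end



lemma length_le_sum: "\<forall>x\<in>set xs. (0::nat) < x \<Longrightarrow> length xs \<le> sum_list xs"
  by (induction xs) auto

context shp begin

lemma gf:
  assumes T: "T \<in> syt lam" and desT: "des lam T = n - lam!0"
  shows "gT lam (fS lam T) (fU lam T) = T"
proof
  fix p
  have an: "fa lam T \<le> n" using a_range[OF T desT] by simp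
  have k: "sum_list lam - card (fS lam T) = fa lam T" using S_props(3)[OF T desT] an sumn by simp
  show "gT lam (fS lam T) (fU lam T) p = T p"
  proof (cases "p \<in> cells (lower lam (insert 0 (fS lam T)))")
    case True
    then show ?thesis using cells_mu[OF T desT] by (simp add: gT_def fU_def)
  next
    case False
    show ?thesis
    proof (cases "p \<in> cells lam")
      case True
      then have "p \<in> E lam (insert 0 (fS lam T))" using False unfolding cells_lower by blast
      then show ?thesis using T_on_E[OF T desT] False True k by (simp add: gT_def)
    next
      case False2: False
      then show ?thesis using False syt_D(2)[OF T] by (simp add: gT_def)
    qed
  qed
qed

lemma cardS_bound: "S \<subseteq> {1..<r} \<Longrightarrow> card S \<le> n - lam!0"
proof -
  assume S: "S \<subseteq> {1..<r}"
  have "card S \<le> r - 1" using card_mono[OF _ S] by simp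
  obtain x xs where lx: "lam = x # xs" using len rpos by (cases lam) auto
  have "length xs \<le> sum_list xs" using pos lx by (intro length_le_sum) simp
  moreover have "r = Suc (length xs)" "n = x + sum_list xs" "lam!0 = x" using lx len sumn by auto
  ultimately show ?thesis using \<open>card S \<le> r - 1\<close> by simp
qed

theorem main:
  "fpoly lam (n - lam ! 0) =
    (\<Sum>S | S \<subseteq> {1..<r}.
       monom 1 (card S * n - (card S + 1 choose 2))
       * fpoly (lower lam (insert 0 S)) (n - lam ! 0 - card S))"
proof -
  define A where "A = {T \<in> syt lam. des lam T = n - lam!0}"
  define P where "P = {S. S \<subseteq> {1..<r}}"
  define B where "B S = {U \<in> syt (lower lam (insert 0 S)). is_partition (lower lam (insert 0 S))
        \<and> des (lower lam (insert 0 S)) U = n - lam!0 - card S}" for S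
  define h where "h S U = (monom 1 (card S * n - (card S + 1 choose 2) + maj (lower lam (insert 0 S)) U) :: int poly)" for S U
  have L: "fpoly lam (n - lam!0) = (\<Sum>T\<in>A. monom 1 (maj lam T))"
    by (simp add: fpoly_def part A_def)
  have R: "monom 1 (card S * n - (card S + 1 choose 2))
       * fpoly (lower lam (insert 0 S)) (n - lam ! 0 - card S) = (\<Sum>U\<in>B S. h S U)" for S
  proof (cases "is_partition (lower lam (insert 0 S))")
    case True
    then show ?thesis by (simp add: fpoly_def B_def h_def sum_distrib_left mult_monom)
  next
    case False
    then show ?thesis by (simp add: fpoly_def B_def)
  qed
  have finP: "finite P" unfolding P_def by simp
  have finB: "\<forall>S\<in>P. finite (B S)" unfolding B_def using finite_syt by simp
  have "(\<Sum>S | S \<subseteq> {1..<r}. monom 1 (card S * n - (card S + 1 choose 2))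
       * fpoly (lower lam (insert 0 S)) (n - lam ! 0 - card S)) = (\<Sum>S\<in>P. \<Sum>U\<in>B S. h S U)"
    unfolding P_def using R by simp
  also have "\<dots> = (\<Sum>x\<in>Sigma P B. case_prod h x)" by (rule sum.Sigma[OF finP finB])
  also have "\<dots> = (\<Sum>T\<in>A. monom 1 (maj lam T))"
  proof (rule sum.reindex_bij_witness[where i = "\<lambda>T. (fS lam T, fU lam T)" and j = "\<lambda>(S,U). gT lam S U"])
    fix x assume x: "x \<in> Sigma P B"
    obtain S U where SU: "x = (S,U)" by force
    have S: "S \<subseteq> {1..<r}" and mp: "is_partition (lower lam (insert 0 S))"
      and U: "U \<in> syt (lower lam (insert 0 S))"
      and dU: "des (lower lam (insert 0 S)) U = n - lam!0 - card S"
      using x SU by (auto simp: P_def B_def)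
    show "(\<lambda>T. (fS lam T, fU lam T)) ((\<lambda>(S,U). gT lam S U) x) = x"
      using fS_G[OF S mp U] fU_G[OF S mp U] SU by simp
    show "(\<lambda>(S,U). gT lam S U) x \<in> A"
      using G_syt[OF S mp U] glue_bwd(1)[OF S mp U] dU cardS_bound[OF S] SU by (simp add: A_def)
    show "(\<lambda>T. monom 1 (maj lam T)) ((\<lambda>(S,U). gT lam S U) x) = case_prod h x"
    proof -
      have k: "card S \<le> n" using cardS_bound[OF S] by simp
      show ?thesis using glue_bwd(2)[OF S mp U] sum_top[OF k] SU by (simp add: h_def add.commute)
    qed
  next
    fix T assume "T \<in> A"
    then have T: "T \<in> syt lam" and desT: "des lam T = n - lam!0" by (auto simp: A_def)
    show "(\<lambda>(S,U). gT lam S U) (fS lam T, fU lam T) = T" using gf[OF T desT] by simp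
    have an: "fa lam T \<le> n" using a_range[OF T desT] by simp
    have cS: "card (fS lam T) = n - fa lam T" by (rule S_props(3)[OF T desT])
    have "des (lower lam (insert 0 (fS lam T))) (fU lam T) = n - lam!0 - card (fS lam T)"
      using glue_fwd(1)[OF T desT] desT cS by simp
    then show "(fS lam T, fU lam T) \<in> Sigma P B"
      using S_props(2)[OF T desT] U_syt[OF T desT] mu_part[OF T desT]
      by (simp add: P_def B_def)
  qed
  finally show ?thesis using L by simp
qed

end



theorem mainTheorem10:
  fixes lam :: "nat list" and n r :: nat
  assumes "is_partition lam" and "sum_list lam = n" and "length lam = r"
    and "\<forall>x\<in>set lam. x > 0"
  shows "fpoly lam (n - lam ! 0) =
    (\<Sum>S | S \<subseteq> {1..<r}.
       monom 1 (card S * n - (card S + 1 choose 2))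
       * fpoly (lower lam (insert 0 S)) (n - lam ! 0 - card S))"
proof (cases "r = 0")
  case True
  then have "lam = []" "n = 0" using assms by auto
  then show ?thesis using True by (simp add: lower_def)
next
  case False
  interpret shp lam n r using assms False by unfold_locales auto
  show ?thesis by (rule main)
qed

end
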